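(* Let $0 < \alpha < 10^{-6}$ and let $n, d \in \mathbb{N}$ satisfy $n/150 \le d \le n/3$. Let $V, W$ be a partition of a set of $n$ vertices with $|W| = d$ and $|V| = n-d$. Suppose that $H$ is a $3$-uniform hypergraph on vertex set $V \cup W$ in which every vertex is $\alpha$-good (with respect to $H_{n,d}(V,W)$). Then $H$ contains a matching of size $d$.
   Context: Given a partition $V, W$ of a set of $n$ vertices with $|W| = d \le n/3$, $H_{n,d}(V,W)$ denotes the $3$-uniform hypergraph on vertex set $V \cup W$ whose edges are exactly the $3$-sets with either exactly two vertices in $V$ and one in $W$, or exactly one vertex in $V$ and two in $W$. For a vertex $v$ of a $3$-uniform hypergraph $G$, $N_G(v)$ denotes the set of unordered pairs $\{a,b\}$ such that $\{v,a,b\}$ is an edge of $G$. For a $3$-uniform hypergraph $H$ on vertex set $V \cup W$, a vertex $v$ is $\alpha$-good if $|N_{H_{n,d}(V,W)}(v) \setminus N_H(v)| \le \alpha n^2$, and $\alpha$-bad otherwise. *)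

theory Defs
  imports Complex_Main "HOL-Library.Disjoint_Sets"
begin

definition three_graph :: "'a set \<Rightarrow> 'a set set \<Rightarrow> bool" where
  "three_graph X H \<longleftrightarrow> (\<forall>e\<in>H. e \<subseteq> X \<and> card e = 3)"

definition Hnd :: "'a set \<Rightarrow> 'a set \<Rightarrow> 'a set set" where
  "Hnd V W = {e. e \<subseteq> V \<union> W \<and> card e = 3 \<and>
      ((card (e \<inter> V) = 2 \<and> card (e \<inter> W) = 1) \<or> (card (e \<inter> V) = 1 \<and> card (e \<inter> W) = 2))}"

definition nbhd :: "'a set set \<Rightarrow> 'a \<Rightarrow> 'a set set" where
  "nbhd G v = {{a, b} | a b. {v, a, b} \<in> G}"

definition alpha_good :: "real \<Rightarrow> nat \<Rightarrow> 'a set \<Rightarrow> 'a set \<Rightarrow> 'a set set \<Rightarrow> 'a \<Rightarrow> bool" where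
  "alpha_good \<alpha> n V W H v \<longleftrightarrow> real (card (nbhd (Hnd V W) v - nbhd H v)) \<le> \<alpha> * (real n)^2"

definition matching :: "'a set set \<Rightarrow> 'a set set \<Rightarrow> bool" where
  "matching H M \<longleftrightarrow> M \<subseteq> H \<and> disjoint M"

end

theory Submission
  imports Defs
begin

definition GM :: "'a set \<Rightarrow> 'a set \<Rightarrow> 'a set set \<Rightarrow> 'a set set \<Rightarrow> bool" where
 "GM V W H M \<longleftrightarrow> M \<subseteq> H \<and> disjoint M \<and>
    (\<forall>e\<in>M. e \<subseteq> V \<union> W \<and> card (e \<inter> W) = 1 \<and> card (e \<inter> V) = 2)"

definition pt :: "'a set \<Rightarrow> 'a \<Rightarrow> 'a" where
  "pt A x = the_elem (A - {x})"

lemma pt_facts: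
  assumes "card A = 2" "x \<in> A"
  shows "pt A x \<in> A \<and> pt A x \<noteq> x \<and> A = {x, pt A x}"
proof -
  have "card (A - {x}) = 1" using assms by (simp add: card_Diff_singleton)
  then obtain z where z: "A - {x} = {z}" by (metis card_1_singletonE)
  then have "pt A x = z" by (simp add: pt_def)
  with z assms show ?thesis by auto
qed

lemma single_the: "card A = 1 \<Longrightarrow> A = {the_elem A}"
  by (metis card_1_singletonE the_elem_eq)

lemma card_fiber:
  assumes "finite A" "finite B" "f ` A \<subseteq> B" "\<forall>b\<in>B. card {a\<in>A. f a = b} \<le> m"
  shows "card A \<le> m * card B"
proof -
  have "A = (\<Union>b\<in>B. {a\<in>A. f a = b})" using assms(3) by auto
  then have "card A \<le> (\<Sum>b\<in>B. card {a\<in>A. f a = b})"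
    by (metis card_UN_le assms(2))
  also have "\<dots> \<le> (\<Sum>b\<in>B. m)" by (rule sum_mono) (use assms(4) in auto)
  finally show ?thesis by (simp add: mult.commute)
qed

lemma two_choose: "2 * (u choose 2) = u * (u - 1)"
proof -
  have "even (u * (u - 1))" by (cases "even u") auto
  then show ?thesis by (simp add: choose_two)
qed

lemma arith_final:
  fixes U K N cV a :: real
  assumes U2: "U \<ge> 2" and K0: "K \<ge> 0" and hU: "U * (U - 1) \<le> 2 * a" and hK: "4 * (K * (K - 1)) \<le> 6 * a"
    and ha: "a < N^2 / 10^6" and sum: "U + 2 * K = cV" and NcV: "2 * N \<le> 3 * cV" and N0: "N \<ge> 0"
  shows False
proof -
  have "U * U / 2 \<le> U * (U - 1)"
  proof -
    have "0 \<le> U * (U / 2 - 1)" using U2 by simp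
    then show ?thesis by (simp add: algebra_simps)
  qed
  have N5: "(N / 500) ^ 2 = N ^ 2 / 250000" by (simp add: power_divide)
  have ha': "a < N ^ 2 / 1000000" using ha by simp
  have "U * U \<le> 4 * a" using \<open>U * U / 2 \<le> U * (U - 1)\<close> hU by linarith
  then have Usq: "U ^ 2 < (N / 500) ^ 2" unfolding N5 power2_eq_square[of U] using ha' by linarith
  have N500: "0 \<le> N / 500" using N0 by simp
  have Ub: "U < N / 500" by (rule power_less_imp_less_base[OF Usq N500])
  show False
  proof (cases "K \<ge> 2")
    case True
    have "K * K / 2 \<le> K * (K - 1)"
    proof -
      have "0 \<le> K * (K / 2 - 1)" using True by simp
      then show ?thesis by (simp add: algebra_simps)
    qed
    then have "K * K \<le> 3 * a" using hK by linarith
    then have Ksq: "K ^ 2 < (N / 500) ^ 2" unfolding N5 power2_eq_square[of K] using ha' zero_le_power2[of N] by linarith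
    have "K < N / 500" by (rule power_less_imp_less_base[OF Ksq N500])
    then show False using Ub sum NcV N0 by linarith
  next
    case False
    then show False using Ub sum NcV N0 U2 by linarith
  qed
qed

context
  fixes V W :: "'a set" and H :: "'a set set"
  assumes finV: "finite V" and finW: "finite W" and VW: "V \<inter> W = {}"
begin

definition Miss :: "'a \<Rightarrow> 'a set set" where
  "Miss u = nbhd (Hnd V W) u - nbhd H u"

lemma Miss_eq: "Miss u = nbhd (Hnd V W) u - nbhd H u" by (simp add: Miss_def)

lemma Miss_finite: "finite (Miss u)"
proof -
  have "Miss u \<subseteq> Pow (V \<union> W)"
    unfolding Miss_def nbhd_def Hnd_def by auto
  then show ?thesis using finV finW finite_subset by blast
qed

lemma miss_pair:
  assumes "{u, a, b} \<in> Hnd V W" "{u, a, b} \<notin> H"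
  shows "{a, b} \<in> Miss u"
proof -
  have "{a, b} \<in> nbhd (Hnd V W) u" using assms(1) unfolding nbhd_def by blast
  moreover have "{a, b} \<notin> nbhd H u"
  proof
    assume "{a, b} \<in> nbhd H u"
    then obtain a' b' where "{a, b} = {a', b'}" "{u, a', b'} \<in> H" unfolding nbhd_def by blast
    then have "{u, a, b} \<in> H" by (metis insert_commute insert_is_Un)
    with assms(2) show False by simp
  qed
  ultimately show ?thesis unfolding Miss_def by blast
qed

lemma hnd_vvw:
  assumes "u \<in> V" "x \<in> V" "w \<in> W" "u \<noteq> x"
  shows "{u, x, w} \<in> Hnd V W"
proof -
  have wu: "w \<noteq> u" "w \<noteq> x" using assms VW by auto
  have "{u, x, w} \<inter> V = {u, x}" using assms VW by auto
  moreover have "{u, x, w} \<inter> W = {w}" using assms VW by auto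
  moreover have "card {u, x, w} = 3" using wu assms by auto
  ultimately show ?thesis unfolding Hnd_def using assms by auto
qed

lemma GM_fin: "GM V W H M \<Longrightarrow> finite M"
proof -
  assume "GM V W H M"
  hence "M \<subseteq> Pow (V \<union> W)" by (auto simp: GM_def)
  thus ?thesis using finV finW finite_subset by blast
qed

lemma GM_same: "GM V W H M \<Longrightarrow> e \<in> M \<Longrightarrow> e' \<in> M \<Longrightarrow> z \<in> e \<Longrightarrow> z \<in> e' \<Longrightarrow> e = e'"
  by (auto simp: GM_def pairwise_def disjnt_def)

lemma card_cov:
  assumes "GM V W H M"
  shows "card (\<Union>M \<inter> V) = 2 * card M \<and> card (\<Union>M \<inter> W) = card M"
proof -
  have fM: "finite M" using GM_fin assms by blast
  have e1: "\<Union>M \<inter> V = (\<Union>e\<in>M. e \<inter> V)" by auto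
  have e2: "\<Union>M \<inter> W = (\<Union>e\<in>M. e \<inter> W)" by auto
  have "card (\<Union>e\<in>M. e \<inter> V) = (\<Sum>e\<in>M. card (e \<inter> V))"
  proof (rule card_UN_disjoint)
    show "\<forall>i\<in>M. \<forall>j\<in>M. i \<noteq> j \<longrightarrow> i \<inter> V \<inter> (j \<inter> V) = {}"
      using GM_same[OF assms] by blast
  qed (use fM finV in auto)
  also have "\<dots> = (\<Sum>e\<in>M. 2)" using assms unfolding GM_def by (intro sum.cong) auto
  finally have c1: "card (\<Union>M \<inter> V) = 2 * card M" unfolding e1 by simp
  have "card (\<Union>e\<in>M. e \<inter> W) = (\<Sum>e\<in>M. card (e \<inter> W))"
  proof (rule card_UN_disjoint)
    show "\<forall>i\<in>M. \<forall>j\<in>M. i \<noteq> j \<longrightarrow> i \<inter> W \<inter> (j \<inter> W) = {}"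
      using GM_same[OF assms] by blast
  qed (use fM finW in auto)
  also have "\<dots> = (\<Sum>e\<in>M. 1)" using assms unfolding GM_def by (intro sum.cong) auto
  finally have c2: "card (\<Union>M \<inter> W) = card M" unfolding e2 by simp
  show ?thesis using c1 c2 by simp
qed

lemma GM_replace:
  assumes GM: "GM V W H M" and R: "R \<subseteq> M" and fF: "finite F" and FH: "F \<subseteq> H"
    and Fty: "\<forall>E\<in>F. E \<subseteq> V \<union> W \<and> card (E \<inter> W) = 1 \<and> card (E \<inter> V) = 2"
    and Fd: "disjoint F" and Fdis: "\<forall>E\<in>F. \<forall>e\<in>M - R. disjnt E e" and FM: "F \<inter> M = {}"
  shows "GM V W H ((M - R) \<union> F) \<and> card ((M - R) \<union> F) = card M - card R + card F"
proof -
  have fM: "finite M" using GM_fin GM by blast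
  have "disjoint M" using GM by (simp add: GM_def)
  then have dMR: "disjoint (M - R)" by (auto simp: pairwise_def)
  have "disjoint ((M - R) \<union> F)"
    unfolding pairwise_def
  proof (intro ballI impI)
    fix a b assume a: "a \<in> M - R \<union> F" and b: "b \<in> M - R \<union> F" and ab: "a \<noteq> b"
    show "disjnt a b"
    proof (cases "a \<in> F")
      case True
      show ?thesis
      proof (cases "b \<in> F")
        case True
        then show ?thesis using \<open>a \<in> F\<close> ab Fd unfolding pairwise_def by blast
      next
        case False
        then have "b \<in> M - R" using b by blast
        then show ?thesis using \<open>a \<in> F\<close> Fdis by blast
      qed
    next
      case False
      then have aM: "a \<in> M - R" using a by blast
      show ?thesis
      proof (cases "b \<in> F")
        case True
        then show ?thesis using aM Fdis disjnt_sym by blast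
      next
        case False
        then have "b \<in> M - R" using b by blast
        then show ?thesis using aM ab dMR unfolding pairwise_def by blast
      qed
    qed
  qed
  moreover have "(M - R) \<union> F \<subseteq> H" using GM FH unfolding GM_def by auto
  moreover have "\<forall>e\<in>(M - R) \<union> F. e \<subseteq> V \<union> W \<and> card (e \<inter> W) = 1 \<and> card (e \<inter> V) = 2"
  proof
    fix e assume "e \<in> (M - R) \<union> F"
    then show "e \<subseteq> V \<union> W \<and> card (e \<inter> W) = 1 \<and> card (e \<inter> V) = 2"
    proof
      assume "e \<in> M - R" then show ?thesis using GM unfolding GM_def by blast
    next
      assume "e \<in> F" then show ?thesis using Fty by blast
    qed
  qed
  ultimately have g: "GM V W H ((M - R) \<union> F)" unfolding GM_def by blast
  have "card ((M - R) \<union> F) = card (M - R) + card F"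
    by (rule card_Un_disjoint) (use fM fF FM in auto)
  also have "card (M - R) = card M - card R" using R fM by (meson card_Diff_subset finite_subset)
  finally show ?thesis using g by simp
qed

lemma card_U:
  assumes "GM V W H M"
  shows "card (V - \<Union>M) = card V - 2 * card M"
proof -
  have "V - \<Union>M = V - (\<Union>M \<inter> V)" by auto
  then have "card (V - \<Union>M) = card V - card (\<Union>M \<inter> V)"
    using finV by (simp add: card_Diff_subset)
  then show ?thesis using card_cov[OF assms] by simp
qed

lemma caseA:
  assumes GM: "GM V W H M" and k: "card M < card W" and VW2: "2 * card W \<le> card V"
    and noaug: "\<forall>M'. GM V W H M' \<longrightarrow> card M' \<le> card M"
  shows "\<exists>w0\<in>W. card (V - \<Union>M) choose 2 \<le> card (Miss w0)"
proof -
  have "card (\<Union>M \<inter> W) < card W" using card_cov[OF GM] k by simp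
  moreover have "finite (\<Union>M \<inter> W)" using finW by simp
  ultimately have "\<not> W \<subseteq> \<Union>M \<inter> W" using card_mono not_le by metis
  then obtain w0 where w0: "w0 \<in> W" "w0 \<notin> \<Union>M" by blast
  define U where "U = V - \<Union>M"
  have noe: "{w0, u, u'} \<notin> H" if "u \<in> U" "u' \<in> U" "u \<noteq> u'" for u u'
  proof
    assume EH: "{w0, u, u'} \<in> H"
    have uV: "u \<in> V" "u' \<in> V" "u \<notin> \<Union>M" "u' \<notin> \<Union>M" using that U_def by auto
    have wu: "w0 \<noteq> u" "w0 \<noteq> u'" using uV w0 VW by auto
    let ?E = "{w0, u, u'}"
    have i1: "?E \<inter> W = {w0}" using uV w0 VW by auto
    have i2: "?E \<inter> V = {u, u'}" using uV w0 VW by auto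
    have p1: "\<forall>E\<in>{?E}. \<forall>e\<in>M - {}. disjnt E e"
        using w0 uV by (auto simp: disjnt_def)
    have p2: "{?E} \<inter> M = {}" using w0 by auto
    have p3: "\<forall>E\<in>{?E}. E \<subseteq> V \<union> W \<and> card (E \<inter> W) = 1 \<and> card (E \<inter> V) = 2"
    proof -
      have "?E \<subseteq> V \<union> W" using uV w0 by blast
      moreover have "card (?E \<inter> W) = 1" unfolding i1 by simp
      moreover have "card (?E \<inter> V) = 2" unfolding i2 using that(3) by simp
      ultimately show ?thesis by blast
    qed
    have p4: "disjoint {?E}" by simp
    have p5: "{?E} \<subseteq> H" using EH by simp
    note GM_replace[OF GM empty_subsetI finite.insertI[OF finite.emptyI] p5 p3 p4 p1 p2]
    then have "GM V W H (M \<union> {?E})" "card (M \<union> {?E}) = card M + 1" by simp_all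
    then show False using noaug by fastforce
  qed
  have sub: "{B. B \<subseteq> U \<and> card B = 2} \<subseteq> Miss w0"
  proof
    fix B assume "B \<in> {B. B \<subseteq> U \<and> card B = 2}"
    then obtain u u' where B: "B = {u, u'}" "u \<noteq> u'" "u \<in> U" "u' \<in> U"
      by (auto simp: card_2_iff)
    have "{u, u', w0} \<in> Hnd V W" using hnd_vvw B w0 U_def by auto
    then have "{w0, u, u'} \<in> Hnd V W" by (metis insert_commute)
    then show "B \<in> Miss w0" using miss_pair noe B by blast
  qed
  have "card {B. B \<subseteq> U \<and> card B = 2} = card U choose 2"
    using finV U_def by (simp add: n_subsets)
  then have "card U choose 2 \<le> card (Miss w0)"
    using card_mono[OF Miss_finite sub] by simp
  then show ?thesis using w0 U_def by blast
qed

definition wv :: "'a set \<Rightarrow> 'a" where "wv e = the_elem (e \<inter> W)"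

lemma wv_facts:
  assumes "GM V W H M" "e \<in> M"
  shows "e \<inter> W = {wv e} \<and> wv e \<in> e \<and> wv e \<in> W"
proof -
  have "card (e \<inter> W) = 1" using assms unfolding GM_def by blast
  then have "e \<inter> W = {wv e}" unfolding wv_def by (rule single_the)
  then show ?thesis by blast
qed

lemma V_facts:
  assumes "GM V W H M" "e \<in> M" "x \<in> e \<inter> V"
  shows "pt (e \<inter> V) x \<in> e \<and> pt (e \<inter> V) x \<in> V \<and> pt (e \<inter> V) x \<noteq> x \<and> e \<inter> V = {x, pt (e \<inter> V) x}"
proof -
  have "card (e \<inter> V) = 2" using assms unfolding GM_def by blast
  from pt_facts[OF this assms(3)] show ?thesis by blast
qed

lemma e_eq:
  assumes "GM V W H M" "e \<in> M" "x \<in> e \<inter> V"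
  shows "e = {x, pt (e \<inter> V) x, wv e}"
proof -
  have "e \<subseteq> V \<union> W" using assms unfolding GM_def by blast
  then have "e = (e \<inter> V) \<union> (e \<inter> W)" by blast
  also have "\<dots> = {x, pt (e \<inter> V) x} \<union> {wv e}"
    using V_facts[OF assms] wv_facts[OF assms(1,2)] by simp
  finally show ?thesis by auto
qed

lemma uncovered_w:
  assumes GM: "GM V W H M" and k: "card M < card W"
  shows "\<exists>w0. w0 \<in> W \<and> w0 \<notin> \<Union>M"
proof -
  have "card (\<Union>M \<inter> W) < card W" using card_cov[OF GM] k by simp
  moreover have "finite (\<Union>M \<inter> W)" using finW by simp
  ultimately have "\<not> W \<subseteq> \<Union>M \<inter> W" using card_mono not_le by metis
  then show ?thesis by blast
qed

lemma swap:
  assumes GM: "GM V W H M" and e1: "e1 \<in> M" and e2: "e2 \<in> M" and ne: "e1 \<noteq> e2"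
    and x: "x \<in> e1 \<inter> V" and y: "y \<in> e2 \<inter> V"
    and u1: "u1 \<in> V" "u1 \<notin> \<Union>M" and u2: "u2 \<in> V" "u2 \<notin> \<Union>M" and u12: "u1 \<noteq> u2"
    and w0: "w0 \<in> W" "w0 \<notin> \<Union>M"
    and H1: "{u1, x, wv e2} \<in> H" and H2: "{u2, y, wv e1} \<in> H"
    and H3: "{w0, pt (e1 \<inter> V) x, pt (e2 \<inter> V) y} \<in> H"
  shows "\<exists>M'. GM V W H M' \<and> card M' = card M + 1"
proof -
  define b1 where "b1 = pt (e1 \<inter> V) x"
  define b2 where "b2 = pt (e2 \<inter> V) y"
  define w1 where "w1 = wv e1"
  define w2 where "w2 = wv e2"
  have E1: "e1 = {x, b1, w1}" using e_eq[OF GM e1 x] b1_def w1_def by simp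
  have E2: "e2 = {y, b2, w2}" using e_eq[OF GM e2 y] b2_def w2_def by simp
  have vb1: "b1 \<in> V" "b1 \<noteq> x" using V_facts[OF GM e1 x] b1_def by auto
  have vb2: "b2 \<in> V" "b2 \<noteq> y" using V_facts[OF GM e2 y] b2_def by auto
  have ww: "w1 \<in> W" "w2 \<in> W" using wv_facts[OF GM e1] wv_facts[OF GM e2] w1_def w2_def by auto
  have xy: "x \<in> V" "y \<in> V" using x y by auto
  have d12: "e1 \<inter> e2 = {}" using GM_same[OF GM e1 e2] ne by blast
  have dis: "x \<noteq> y" "x \<noteq> b2" "x \<noteq> w2" "b1 \<noteq> y" "b1 \<noteq> b2" "b1 \<noteq> w2"
    "w1 \<noteq> y" "w1 \<noteq> b2" "w1 \<noteq> w2"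
    using d12 unfolding E1 E2 by blast+
  have cov: "\<forall>z\<in>e1 \<union> e2. z \<noteq> u1 \<and> z \<noteq> u2 \<and> z \<noteq> w0" using u1 u2 w0 e1 e2 by blast
  have cov1: "u1 \<noteq> x" "u1 \<noteq> b1" "u1 \<noteq> w1" "u1 \<noteq> y" "u1 \<noteq> b2" "u1 \<noteq> w2"
    "u2 \<noteq> x" "u2 \<noteq> b1" "u2 \<noteq> w1" "u2 \<noteq> y" "u2 \<noteq> b2" "u2 \<noteq> w2"
    "w0 \<noteq> x" "w0 \<noteq> b1" "w0 \<noteq> w1" "w0 \<noteq> y" "w0 \<noteq> b2" "w0 \<noteq> w2"
    using cov unfolding E1 E2 by blast+
  have uw: "u1 \<noteq> w0" "u2 \<noteq> w0" using u1 u2 w0 VW by auto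
  define F1 where "F1 = {u1, x, w2}"
  define F2 where "F2 = {u2, y, w1}"
  define F3 where "F3 = {w0, b1, b2}"
  let ?F = "{F1, F2, F3}"
  have FH: "?F \<subseteq> H" using H1 H2 H3 F1_def F2_def F3_def b1_def b2_def w1_def w2_def by simp
  have t1: "F1 \<inter> W = {w2}" "F1 \<inter> V = {u1, x}" "F1 \<subseteq> V \<union> W"
    using u1 xy ww VW unfolding F1_def by auto
  have t2: "F2 \<inter> W = {w1}" "F2 \<inter> V = {u2, y}" "F2 \<subseteq> V \<union> W"
    using u2 xy ww VW unfolding F2_def by auto
  have t3: "F3 \<inter> W = {w0}" "F3 \<inter> V = {b1, b2}" "F3 \<subseteq> V \<union> W"
    using w0 vb1 vb2 VW unfolding F3_def by auto
  have Fty: "\<forall>E\<in>?F. E \<subseteq> V \<union> W \<and> card (E \<inter> W) = 1 \<and> card (E \<inter> V) = 2"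
    using t1 t2 t3 cov1 dis by simp
  have n12: "F1 \<noteq> F2" "F1 \<noteq> F3" "F2 \<noteq> F3"
  proof -
    have "u1 \<in> F1" "u1 \<notin> F2" "u1 \<notin> F3" "u2 \<in> F2" "u2 \<notin> F3"
      unfolding F1_def F2_def F3_def using cov1 dis u12 uw by blast+
    then show "F1 \<noteq> F2" "F1 \<noteq> F3" "F2 \<noteq> F3" by blast+
  qed
  have dj1: "disjnt F1 F2" unfolding F1_def F2_def disjnt_def using cov1 dis u12 uw xy ww VW by blast
  have dj2: "disjnt F1 F3" unfolding F1_def F3_def disjnt_def using cov1 dis u12 uw vb1 vb2 xy ww VW by blast
  have dj3: "disjnt F2 F3" unfolding F2_def F3_def disjnt_def using cov1 dis u12 uw vb1 vb2 xy ww VW by blast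
  note dj = dj1 dj2 dj3
  have Fd: "disjoint ?F"
    using dj n12 by (auto simp: pairwise_insert disjnt_sym)
  have Fdis: "\<forall>E\<in>?F. \<forall>e\<in>M - {e1, e2}. disjnt E e"
  proof (intro ballI)
    fix E e assume E: "E \<in> ?F" and e: "e \<in> M - {e1, e2}"
    have "E \<subseteq> e1 \<union> e2 \<union> {u1, u2, w0}" using E unfolding F1_def F2_def F3_def E1 E2 by auto
    moreover have "e \<inter> e1 = {}" "e \<inter> e2 = {}" using GM_same[OF GM] e e1 e2 by blast+
    moreover have "u1 \<notin> e" "u2 \<notin> e" "w0 \<notin> e" using u1 u2 w0 e by blast+
    ultimately show "disjnt E e" unfolding disjnt_def by blast
  qed
  have FM: "?F \<inter> M = {}"
  proof -
    have "u1 \<in> F1" "u2 \<in> F2" "w0 \<in> F3" unfolding F1_def F2_def F3_def by simp_all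
    then show ?thesis using u1 u2 w0 by blast
  qed
  have R: "{e1, e2} \<subseteq> M" using e1 e2 by simp
  note r = GM_replace[OF GM R _ FH Fty Fd Fdis FM]
  have cF: "card ?F = 3" using n12 by simp
  have cR: "card {e1, e2} = 2" using ne by simp
  have "card M \<ge> 2" using card_mono[OF GM_fin[OF GM] R] cR by simp
  then show ?thesis using r cF cR by (intro exI[of _ "M - {e1, e2} \<union> ?F"]) simp
qed

lemma pt_inj:
  assumes GM: "GM V W H M" and "e \<in> M" "x \<in> e \<inter> V" "e' \<in> M" "x' \<in> e' \<inter> V"
    and eq: "pt (e \<inter> V) x = pt (e' \<inter> V) x'"
  shows "e' = e \<and> x' = x"
proof -
  have A: "pt (e \<inter> V) x \<in> e \<and> pt (e \<inter> V) x \<noteq> x \<and> e \<inter> V = {x, pt (e \<inter> V) x}"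
    using V_facts[OF GM assms(2,3)] by blast
  have B: "pt (e' \<inter> V) x' \<in> e' \<and> pt (e' \<inter> V) x' \<noteq> x' \<and> e' \<inter> V = {x', pt (e' \<inter> V) x'}"
    using V_facts[OF GM assms(4,5)] by blast
  have ee: "e' = e" using GM_same[OF GM assms(2,4)] A B eq by metis
  then have "{x, pt (e \<inter> V) x} = {x', pt (e \<inter> V) x}" using A B eq by metis
  then have "x' = x" using A B eq by (auto simp: doubleton_eq_iff)
  with ee show ?thesis by blast
qed

lemma fib1:
  assumes GM: "GM V W H M" and "e1 \<in> M" "x \<in> e1 \<inter> V" "e2 \<in> M" "e1' \<in> M" "x' \<in> e1' \<inter> V" "e2' \<in> M"
    and eq: "{x, wv e2} = {x', wv e2'}"
  shows "e1' = e1 \<and> x' = x \<and> e2' = e2"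
proof -
  have w: "wv e2 \<in> W" "wv e2' \<in> W" "wv e2 \<in> e2" "wv e2' \<in> e2'"
    using wv_facts[OF GM assms(4)] wv_facts[OF GM assms(7)] by auto
  have "x \<noteq> wv e2'" using w assms(3) VW by blast
  then have xx: "x = x'" and ww: "wv e2 = wv e2'" using eq by (auto simp: doubleton_eq_iff)
  have "e1' = e1" using GM_same[OF GM assms(2,5)] xx assms(3,6) by blast
  moreover have "e2' = e2" using GM_same[OF GM assms(4,7)] ww w by metis
  ultimately show ?thesis using xx by simp
qed

lemma card_le2:
  assumes "finite A" "card A = 2" "F \<subseteq> g ` A"
  shows "card F \<le> 2"
proof -
  have "card F \<le> card (g ` A)" using assms by (simp add: card_mono)
  also have "\<dots> \<le> card A" using assms(1) by (rule card_image_le)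
  finally show ?thesis using assms(2) by simp
qed

lemma caseB:
  assumes GM: "GM V W H M" and k: "card M < card W" and VW2: "2 * card W \<le> card V"
    and noaug: "\<forall>M'. GM V W H M' \<longrightarrow> card M' \<le> card M"
  shows "\<exists>w0\<in>W. \<exists>u1\<in>V. \<exists>u2\<in>V.
    card M * (4 * (card M - 1)) \<le> 2 * card (Miss u1) + 2 * card (Miss u2) + 2 * card (Miss w0)"
proof -
  have fM: "finite M" using GM_fin[OF GM] .
  obtain w0 where w0: "w0 \<in> W" "w0 \<notin> \<Union>M" using uncovered_w[OF GM k] by blast
  define U where "U = V - \<Union>M"
  have "card U \<ge> 2" using card_U[OF GM] k VW2 U_def by simp
  then have "U \<noteq> {}" by auto
  then obtain u1 where u1U: "u1 \<in> U" by blast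
  have "card (U - {u1}) \<ge> 1" using \<open>card U \<ge> 2\<close> u1U by (simp add: card_Diff_singleton)
  then have "U - {u1} \<noteq> {}" by (metis card.empty not_one_le_zero)
  then obtain u2 where u2U: "u2 \<in> U" "u2 \<noteq> u1" by blast
  have u1: "u1 \<in> V" "u1 \<notin> \<Union>M" and u2: "u2 \<in> V" "u2 \<notin> \<Union>M" using u1U u2U U_def by auto
  define S where "S = (SIGMA e1:M. SIGMA x:e1 \<inter> V. SIGMA e2:M - {e1}. e2 \<inter> V)"
  have memS: "(e1, x, e2, y) \<in> S \<longleftrightarrow> e1 \<in> M \<and> x \<in> e1 \<inter> V \<and> e2 \<in> M \<and> e2 \<noteq> e1 \<and> y \<in> e2 \<inter> V"
    for e1 x e2 y unfolding S_def by auto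
  have finS: "finite S" unfolding S_def using fM finV by (intro finite_SigmaI) auto
  define P1 where "P1 = (\<lambda>(e1::'a set, x::'a, e2::'a set, y::'a). {u1, x, wv e2} \<in> H)"
  define P2 where "P2 = (\<lambda>(e1::'a set, x::'a, e2::'a set, y::'a). {u2, y, wv e1} \<in> H)"
  define P3 where "P3 = (\<lambda>(e1::'a set, x::'a, e2::'a set, y::'a). {w0, pt (e1 \<inter> V) x, pt (e2 \<inter> V) y} \<in> H)"
  define B1 where "B1 = {s\<in>S. \<not> P1 s}"
  define B2 where "B2 = {s\<in>S. \<not> P2 s}"
  define B3 where "B3 = {s\<in>S. \<not> P3 s}"
  have cover: "S \<subseteq> B1 \<union> B2 \<union> B3"
  proof
    fix s assume sS: "s \<in> S"
    obtain e1 x e2 y where s: "s = (e1, x, e2, y)" using prod_cases4 by blast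
    have m: "e1 \<in> M" "x \<in> e1 \<inter> V" "e2 \<in> M" "e2 \<noteq> e1" "y \<in> e2 \<inter> V" using sS s memS by auto
    show "s \<in> B1 \<union> B2 \<union> B3"
    proof (rule ccontr)
      assume "s \<notin> B1 \<union> B2 \<union> B3"
      then have "P1 s" "P2 s" "P3 s" using sS unfolding B1_def B2_def B3_def by auto
      then have h: "{u1, x, wv e2} \<in> H" "{u2, y, wv e1} \<in> H"
        "{w0, pt (e1 \<inter> V) x, pt (e2 \<inter> V) y} \<in> H"
        unfolding s P1_def P2_def P3_def by simp_all
      obtain M' where "GM V W H M'" "card M' = card M + 1"
        using swap[OF GM m(1) m(3) m(4)[symmetric] m(2) m(5) u1 u2 u2U(2)[symmetric] w0 h] by blast
      then show False using noaug by fastforce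
    qed
  qed
  have cS: "card S = card M * (4 * (card M - 1))"
  proof -
    have c1: "card (SIGMA e2:M - {e1}. e2 \<inter> V) = 2 * (card M - 1)" if "e1 \<in> M" for e1
    proof -
      have "card (SIGMA e2:M - {e1}. e2 \<inter> V) = (\<Sum>e2\<in>M - {e1}. card (e2 \<inter> V))"
        using fM finV by (intro card_SigmaI) auto
      also have "\<dots> = (\<Sum>e2\<in>M - {e1}. 2)" using GM unfolding GM_def by (intro sum.cong) auto
      also have "\<dots> = 2 * (card M - 1)" using that fM by (simp add: card_Diff_singleton)
      finally show ?thesis .
    qed
    have c2: "card (SIGMA x:e1 \<inter> V. SIGMA e2:M - {e1}. e2 \<inter> V) = 4 * (card M - 1)" if "e1 \<in> M" for e1
    proof -
      have "card (SIGMA x:e1 \<inter> V. SIGMA e2:M - {e1}. e2 \<inter> V)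
          = (\<Sum>x\<in>e1 \<inter> V. card (SIGMA e2:M - {e1}. e2 \<inter> V))"
        using fM finV by (intro card_SigmaI) auto
      also have "\<dots> = (\<Sum>x\<in>e1 \<inter> V. 2 * (card M - 1))" using c1[OF that] by simp
      also have "\<dots> = card (e1 \<inter> V) * (2 * (card M - 1))" by simp
      also have "card (e1 \<inter> V) = 2" using GM that unfolding GM_def by blast
      finally show ?thesis by simp
    qed
    have "card S = (\<Sum>e1\<in>M. card (SIGMA x:e1 \<inter> V. SIGMA e2:M - {e1}. e2 \<inter> V))"
      unfolding S_def using fM finV by (intro card_SigmaI) auto
    also have "\<dots> = (\<Sum>e1\<in>M. 4 * (card M - 1))" using c2 by simp
    finally show ?thesis by simp
  qed
  have cB1: "card B1 \<le> 2 * card (Miss u1)"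
  proof (rule card_fiber[where f = "\<lambda>(e1, x, e2, y). {x, wv e2}"])
    show "finite B1" using finS unfolding B1_def by simp
    show "finite (Miss u1)" by (rule Miss_finite)
    show "(\<lambda>(e1, x, e2, y). {x, wv e2}) ` B1 \<subseteq> Miss u1"
    proof
      fix b assume "b \<in> (\<lambda>(e1, x, e2, y). {x, wv e2}) ` B1"
      then obtain s where sB: "s \<in> B1" and b: "b = (\<lambda>(e1, x, e2, y). {x, wv e2}) s" by blast
      obtain e1 x e2 y where s: "s = (e1, x, e2, y)" using prod_cases4 by blast
      have m: "e1 \<in> M" "x \<in> e1 \<inter> V" "e2 \<in> M" "e2 \<noteq> e1" "y \<in> e2 \<inter> V"
        using sB s memS unfolding B1_def by auto
      have nH: "{u1, x, wv e2} \<notin> H" using sB s unfolding B1_def P1_def by simp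
      have "u1 \<noteq> x" using u1 m by blast
      then have "{u1, x, wv e2} \<in> Hnd V W" using hnd_vvw u1 m wv_facts[OF GM m(3)] by blast
      then show "b \<in> Miss u1" using miss_pair nH b s by simp
    qed
    show "\<forall>b\<in>Miss u1. card {a \<in> B1. (\<lambda>(e1, x, e2, y). {x, wv e2}) a = b} \<le> 2"
    proof
      fix b
      show "card {a \<in> B1. (\<lambda>(e1, x, e2, y). {x, wv e2}) a = b} \<le> 2"
      proof (cases "{a \<in> B1. (\<lambda>(e1, x, e2, y). {x, wv e2}) a = b} = {}")
        case True then show ?thesis unfolding True by simp
      next
        case False
        then obtain s0 where s0: "s0 \<in> B1" "(\<lambda>(e1, x, e2, y). {x, wv e2}) s0 = b" by blast
        obtain e1 x e2 y where s: "s0 = (e1, x, e2, y)" using prod_cases4 by blast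
        have m: "e1 \<in> M" "x \<in> e1 \<inter> V" "e2 \<in> M" "e2 \<noteq> e1" "y \<in> e2 \<inter> V"
          using s0 s memS unfolding B1_def by auto
        have "{a \<in> B1. (\<lambda>(e1, x, e2, y). {x, wv e2}) a = b} \<subseteq> (\<lambda>y'. (e1, x, e2, y')) ` (e2 \<inter> V)"
        proof
          fix t assume t: "t \<in> {a \<in> B1. (\<lambda>(e1, x, e2, y). {x, wv e2}) a = b}"
          obtain e1' x' e2' y' where tt: "t = (e1', x', e2', y')" using prod_cases4 by blast
          have m': "e1' \<in> M" "x' \<in> e1' \<inter> V" "e2' \<in> M" "e2' \<noteq> e1'" "y' \<in> e2' \<inter> V"
            using t tt memS unfolding B1_def by auto
          have "{x, wv e2} = {x', wv e2'}" using t tt s0 s by simp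
          then have "e1' = e1 \<and> x' = x \<and> e2' = e2" using fib1[OF GM m(1-3) m'(1-3)] by blast
          then show "t \<in> (\<lambda>y'. (e1, x, e2, y')) ` (e2 \<inter> V)" using tt m' by auto
        qed
        moreover have "card (e2 \<inter> V) = 2" using GM m unfolding GM_def by blast
        ultimately show ?thesis using card_le2 finV by blast
      qed
    qed
  qed
  have cB2: "card B2 \<le> 2 * card (Miss u2)"
  proof (rule card_fiber[where f = "\<lambda>(e1, x, e2, y). {y, wv e1}"])
    show "finite B2" using finS unfolding B2_def by simp
    show "finite (Miss u2)" by (rule Miss_finite)
    show "(\<lambda>(e1, x, e2, y). {y, wv e1}) ` B2 \<subseteq> Miss u2"
    proof
      fix b assume "b \<in> (\<lambda>(e1, x, e2, y). {y, wv e1}) ` B2"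
      then obtain s where sB: "s \<in> B2" and b: "b = (\<lambda>(e1, x, e2, y). {y, wv e1}) s" by blast
      obtain e1 x e2 y where s: "s = (e1, x, e2, y)" using prod_cases4 by blast
      have m: "e1 \<in> M" "x \<in> e1 \<inter> V" "e2 \<in> M" "e2 \<noteq> e1" "y \<in> e2 \<inter> V"
        using sB s memS unfolding B2_def by auto
      have nH: "{u2, y, wv e1} \<notin> H" using sB s unfolding B2_def P2_def by simp
      have "u2 \<noteq> y" using u2 m by blast
      then have "{u2, y, wv e1} \<in> Hnd V W" using hnd_vvw u2 m wv_facts[OF GM m(1)] by blast
      then show "b \<in> Miss u2" using miss_pair nH b s by simp
    qed
    show "\<forall>b\<in>Miss u2. card {a \<in> B2. (\<lambda>(e1, x, e2, y). {y, wv e1}) a = b} \<le> 2"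
    proof
      fix b
      show "card {a \<in> B2. (\<lambda>(e1, x, e2, y). {y, wv e1}) a = b} \<le> 2"
      proof (cases "{a \<in> B2. (\<lambda>(e1, x, e2, y). {y, wv e1}) a = b} = {}")
        case True then show ?thesis unfolding True by simp
      next
        case False
        then obtain s0 where s0: "s0 \<in> B2" "(\<lambda>(e1, x, e2, y). {y, wv e1}) s0 = b" by blast
        obtain e1 x e2 y where s: "s0 = (e1, x, e2, y)" using prod_cases4 by blast
        have m: "e1 \<in> M" "x \<in> e1 \<inter> V" "e2 \<in> M" "e2 \<noteq> e1" "y \<in> e2 \<inter> V"
          using s0 s memS unfolding B2_def by auto
        have "{a \<in> B2. (\<lambda>(e1, x, e2, y). {y, wv e1}) a = b} \<subseteq> (\<lambda>x'. (e1, x', e2, y)) ` (e1 \<inter> V)"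
        proof
          fix t assume t: "t \<in> {a \<in> B2. (\<lambda>(e1, x, e2, y). {y, wv e1}) a = b}"
          obtain e1' x' e2' y' where tt: "t = (e1', x', e2', y')" using prod_cases4 by blast
          have m': "e1' \<in> M" "x' \<in> e1' \<inter> V" "e2' \<in> M" "e2' \<noteq> e1'" "y' \<in> e2' \<inter> V"
            using t tt memS unfolding B2_def by auto
          have "{y, wv e1} = {y', wv e1'}" using t tt s0 s by simp
          then have "e2' = e2 \<and> y' = y \<and> e1' = e1"
            using fib1[OF GM m(3) m(5) m(1) m'(3) m'(5) m'(1)] by blast
          then show "t \<in> (\<lambda>x'. (e1, x', e2, y)) ` (e1 \<inter> V)" using tt m' by auto
        qed
        moreover have "card (e1 \<inter> V) = 2" using GM m unfolding GM_def by blast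
        ultimately show ?thesis using card_le2 finV by blast
      qed
    qed
  qed
  have cB3: "card B3 \<le> 2 * card (Miss w0)"
  proof (rule card_fiber[where f = "\<lambda>(e1, x, e2, y). {pt (e1 \<inter> V) x, pt (e2 \<inter> V) y}"])
    show "finite B3" using finS unfolding B3_def by simp
    show "finite (Miss w0)" by (rule Miss_finite)
    show "(\<lambda>(e1, x, e2, y). {pt (e1 \<inter> V) x, pt (e2 \<inter> V) y}) ` B3 \<subseteq> Miss w0"
    proof
      fix b assume "b \<in> (\<lambda>(e1, x, e2, y). {pt (e1 \<inter> V) x, pt (e2 \<inter> V) y}) ` B3"
      then obtain s where sB: "s \<in> B3" and b: "b = (\<lambda>(e1, x, e2, y). {pt (e1 \<inter> V) x, pt (e2 \<inter> V) y}) s" by blast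
      obtain e1 x e2 y where s: "s = (e1, x, e2, y)" using prod_cases4 by blast
      have m: "e1 \<in> M" "x \<in> e1 \<inter> V" "e2 \<in> M" "e2 \<noteq> e1" "y \<in> e2 \<inter> V"
        using sB s memS unfolding B3_def by auto
      have nH: "{w0, pt (e1 \<inter> V) x, pt (e2 \<inter> V) y} \<notin> H" using sB s unfolding B3_def P3_def by simp
      have p1: "pt (e1 \<inter> V) x \<in> e1" "pt (e1 \<inter> V) x \<in> V" using V_facts[OF GM m(1,2)] by auto
      have p2: "pt (e2 \<inter> V) y \<in> e2" "pt (e2 \<inter> V) y \<in> V" using V_facts[OF GM m(3,5)] by auto
      have "pt (e1 \<inter> V) x \<noteq> pt (e2 \<inter> V) y" using GM_same[OF GM m(1) m(3)] p1 p2 m(4) by metis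
      then have "{pt (e1 \<inter> V) x, pt (e2 \<inter> V) y, w0} \<in> Hnd V W" using hnd_vvw p1 p2 w0 by blast
      then have "{w0, pt (e1 \<inter> V) x, pt (e2 \<inter> V) y} \<in> Hnd V W" by (metis insert_commute)
      then show "b \<in> Miss w0" using miss_pair nH b s by simp
    qed
    show "\<forall>b\<in>Miss w0. card {a \<in> B3. (\<lambda>(e1, x, e2, y). {pt (e1 \<inter> V) x, pt (e2 \<inter> V) y}) a = b} \<le> 2"
    proof
      fix b
      show "card {a \<in> B3. (\<lambda>(e1, x, e2, y). {pt (e1 \<inter> V) x, pt (e2 \<inter> V) y}) a = b} \<le> 2"
      proof (cases "{a \<in> B3. (\<lambda>(e1, x, e2, y). {pt (e1 \<inter> V) x, pt (e2 \<inter> V) y}) a = b} = {}")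
        case True then show ?thesis unfolding True by simp
      next
        case False
        then obtain s0 where s0: "s0 \<in> B3" "(\<lambda>(e1, x, e2, y). {pt (e1 \<inter> V) x, pt (e2 \<inter> V) y}) s0 = b" by blast
        obtain e1 x e2 y where s: "s0 = (e1, x, e2, y)" using prod_cases4 by blast
        have m: "e1 \<in> M" "x \<in> e1 \<inter> V" "e2 \<in> M" "e2 \<noteq> e1" "y \<in> e2 \<inter> V"
          using s0 s memS unfolding B3_def by auto
        have "{a \<in> B3. (\<lambda>(e1, x, e2, y). {pt (e1 \<inter> V) x, pt (e2 \<inter> V) y}) a = b}
               \<subseteq> (\<lambda>i. if i then (e1, x, e2, y) else (e2, y, e1, x)) ` {True, False}"
        proof
          fix t assume t: "t \<in> {a \<in> B3. (\<lambda>(e1, x, e2, y). {pt (e1 \<inter> V) x, pt (e2 \<inter> V) y}) a = b}"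
          obtain e1' x' e2' y' where tt: "t = (e1', x', e2', y')" using prod_cases4 by blast
          have m': "e1' \<in> M" "x' \<in> e1' \<inter> V" "e2' \<in> M" "e2' \<noteq> e1'" "y' \<in> e2' \<inter> V"
            using t tt memS unfolding B3_def by auto
          have "{pt (e1 \<inter> V) x, pt (e2 \<inter> V) y} = {pt (e1' \<inter> V) x', pt (e2' \<inter> V) y'}"
            using t tt s0 s by simp
          then have "(pt (e1 \<inter> V) x = pt (e1' \<inter> V) x' \<and> pt (e2 \<inter> V) y = pt (e2' \<inter> V) y')
             \<or> (pt (e1 \<inter> V) x = pt (e2' \<inter> V) y' \<and> pt (e2 \<inter> V) y = pt (e1' \<inter> V) x')"
            by (simp add: doubleton_eq_iff)
          then have "t = (e1, x, e2, y) \<or> t = (e2, y, e1, x)"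
          proof
            assume a: "pt (e1 \<inter> V) x = pt (e1' \<inter> V) x' \<and> pt (e2 \<inter> V) y = pt (e2' \<inter> V) y'"
            have "e1' = e1 \<and> x' = x" using pt_inj[OF GM m(1,2) m'(1,2)] a by blast
            moreover have "e2' = e2 \<and> y' = y" using pt_inj[OF GM m(3,5) m'(3,5)] a by blast
            ultimately show ?thesis using tt by simp
          next
            assume a: "pt (e1 \<inter> V) x = pt (e2' \<inter> V) y' \<and> pt (e2 \<inter> V) y = pt (e1' \<inter> V) x'"
            have "e2' = e1 \<and> y' = x" using pt_inj[OF GM m(1,2) m'(3,5)] a by blast
            moreover have "e1' = e2 \<and> x' = y" using pt_inj[OF GM m(3,5) m'(1,2)] a by blast
            ultimately show ?thesis using tt by simp
          qed
          then show "t \<in> (\<lambda>i. if i then (e1, x, e2, y) else (e2, y, e1, x)) ` {True, False}" by auto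
        qed
        moreover have "card {True, False} = 2" by simp
        ultimately show ?thesis using card_le2[of "{True, False}"] by blast
      qed
    qed
  qed
  have "card S \<le> card (B1 \<union> B2 \<union> B3)" using card_mono cover finS unfolding B1_def B2_def B3_def
    by (metis (no_types, lifting) finite_Un finite_subset mem_Collect_eq subsetI)
  also have "\<dots> \<le> card B1 + card B2 + card B3" by (meson card_Un_le add_right_mono le_trans)
  finally have "card M * (4 * (card M - 1)) \<le> 2 * card (Miss u1) + 2 * card (Miss u2) + 2 * card (Miss w0)"
    using cS cB1 cB2 cB3 by linarith
  then show ?thesis using w0 u1 u2 by blast
qed

end

theorem lemma4p2:
  fixes \<alpha> :: real and n d :: nat and V W :: "'a set" and H :: "'a set set"
  assumes "0 < \<alpha>" and "\<alpha> < 1 / 10^6"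
    and "real n / 150 \<le> real d" and "real d \<le> real n / 3"
    and "finite V" and "finite W" and "V \<inter> W = {}"
    and "card (V \<union> W) = n" and "card W = d" and "card V = n - d"
    and "three_graph (V \<union> W) H"
    and "\<forall>v \<in> V \<union> W. alpha_good \<alpha> n V W H v"
  shows "\<exists>M. matching H M \<and> card M = d"
proof -
  note finV = assms(5) and finW = assms(6) and VW = assms(7)
  have n: "n = card V + card W" using card_Un_disjoint[OF finV finW VW] assms(8) by simp
  have VW2: "2 * card W \<le> card V" using assms(4) assms(9) n by linarith
  have good: "real (card (Miss V W H v)) \<le> \<alpha> * (real n)^2" if "v \<in> V \<union> W" for v
    using assms(12) that unfolding alpha_good_def Miss_eq[OF finV finW VW] by blast
  have P0: "GM V W H {}" unfolding GM_def by simp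
  have bnd: "\<forall>M. GM V W H M \<longrightarrow> card M < card (Pow (V \<union> W)) + 1"
  proof (intro allI impI)
    fix M assume "GM V W H M"
    then have "M \<subseteq> Pow (V \<union> W)" unfolding GM_def by blast
    then have "card M \<le> card (Pow (V \<union> W))"
      using finV finW by (intro card_mono) auto
    then show "card M < card (Pow (V \<union> W)) + 1" by simp
  qed
  obtain M0 where M0: "GM V W H M0" and mx: "\<forall>M. GM V W H M \<longrightarrow> card M \<le> card M0"
    using ex_has_greatest_nat[of "GM V W H" "{}" card, OF P0 bnd] by blast
  show ?thesis
  proof (cases "d \<le> card M0")
    case True
    obtain M1 where M1: "M1 \<subseteq> M0" "card M1 = d" "finite M1" by (rule obtain_subset_with_card_n[OF True])
    have "M0 \<subseteq> H" "disjoint M0" using M0 unfolding GM_def by blast+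
    then have "M1 \<subseteq> H" "disjoint M1" using M1(1) pairwise_subset by blast+
    then have "matching H M1" unfolding matching_def by blast
    then show ?thesis using M1 by blast
  next
    case False
    then have k: "card M0 < card W" using assms(9) by simp
    obtain w0 where w0: "w0 \<in> W" "card (V - \<Union>M0) choose 2 \<le> card (Miss V W H w0)"
      using caseA[OF finV finW VW M0 k VW2 mx] by blast
    obtain w1 u1 u2 where w1: "w1 \<in> W" "u1 \<in> V" "u2 \<in> V"
      "card M0 * (4 * (card M0 - 1)) \<le> 2 * card (Miss V W H u1) + 2 * card (Miss V W H u2) + 2 * card (Miss V W H w1)"
      using caseB[OF finV finW VW M0 k VW2 mx] by blast
    define u where "u = card V - 2 * card M0"
    have cU: "card (V - \<Union>M0) = u" using card_U[OF finV finW VW M0] u_def by simp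
    have u2: "u \<ge> 2" using u_def k VW2 by simp
    define a where "a = \<alpha> * (real n)^2"
    have hu: "real (u * (u - 1)) \<le> 2 * a"
    proof -
      have "u * (u - 1) = 2 * (u choose 2)" using two_choose[of u] by simp
      then have "real (u * (u - 1)) = real (2 * (u choose 2))" by (simp only:)
      also have "\<dots> = 2 * real (u choose 2)" by simp
      also have "\<dots> \<le> 2 * real (card (Miss V W H w0))" using w0 cU by simp
      also have "\<dots> \<le> 2 * a" using good w0 a_def by fastforce
      finally show ?thesis .
    qed
    have hk: "real (card M0 * (4 * (card M0 - 1))) \<le> 6 * a"
    proof -
      have "real (card M0 * (4 * (card M0 - 1))) \<le>
          real (2 * card (Miss V W H u1) + 2 * card (Miss V W H u2) + 2 * card (Miss V W H w1))"
        using w1(4) by (simp only: of_nat_le_iff)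
      also have "\<dots> = 2 * real (card (Miss V W H u1)) + 2 * real (card (Miss V W H u2)) + 2 * real (card (Miss V W H w1))"
        by simp
      also have "\<dots> \<le> 6 * a" using good[of u1] good[of u2] good[of w1] w1 a_def by auto
      finally show ?thesis .
    qed
    have hu': "real u * (real u - 1) \<le> 2 * a" using hu u2 by (simp add: of_nat_diff)
    have hk': "4 * (real (card M0) * (real (card M0) - 1)) \<le> 6 * a"
    proof (cases "card M0 = 0")
      case True then show ?thesis using hk by simp
    next
      case False then show ?thesis using hk by (simp add: of_nat_diff algebra_simps)
    qed
    have ha: "a < (real n)^2 / 10^6"
    proof -
      have "n > 0" using n u2 u_def by linarith
      then have "(real n)^2 > 0" by simp
      then show ?thesis unfolding a_def using assms(2) by (simp add: field_simps)
    qed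
    have sum: "real u + 2 * real (card M0) = real (card V)" using u_def k VW2 by simp
    have NcV: "2 * real n \<le> 3 * real (card V)" using n VW2 by simp
    show ?thesis using arith_final[OF _ _ hu' hk' ha sum NcV] u2 by simp
  qed
qed

end
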